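(* Let $\mathcal{X}$, $f_i$, $\underline{y},\overline{y}$ be as in the context, and consider problem (SCP): $\min_{(y,x)\in\mathcal{X}}\sum_{i=1}^{n_y}f_i(y_i)+\sum_{\omega\in\Omega_1}p_\omega c_\omega^Tx_\omega$. Run the adaptive piecewise linear approximation algorithm described in the context, and assume that in every iteration $s$ the subproblem in step 3 is solved to an optimal solution $(\tilde{y}^s,\tilde{x}^s)$ that is an extreme point of $\mathcal{X}(\tilde{y}^s)=\{(y,x)\in\mathcal{X}: y_i=\tilde{y}^s_i\ \forall i\le n_{\mathrm{I}}\}$. Then the algorithm terminates after finitely many iterations, and the point it returns is a global optimum of (SCP).
   Context: Let $\Omega_1$ be a finite index set, $n_y\geq n_{\mathrm{I}}\geq0$ integers, $A\in\mathbb{R}^{m_1\times n_y}$, $b\in\mathbb{R}^{m_1}$, $D\in\mathbb{R}^{m_2\times n_y}$, and for each $\omega\in\Omega_1$: $p_\omega\in\mathbb{R}$, $c_\omega\in\mathbb{R}^{n_x}$, $B_\omega\in\mathbb{R}^{m_2\times n_x}$, $d_\omega\in\mathbb{R}^{m_2}$. $\mathcal{X}=\{(y,\{x_\omega\}_{\omega\in\Omega_1})\geq0: y\in\mathbb{Z}^{n_{\mathrm{I}}}\times\mathbb{R}^{n_y-n_{\mathrm{I}}},\ Ay=b,\ B_\omega x_\omega+Dy=d_\omega\ \forall\omega\}$ is assumed nonempty and bounded, with vectors $\underline{y},\overline{y}$ such that $\underline{y}\leq y\leq\overline{y}$ for all $(y,x)\in\mathcal{X}$. It is also assumed that for every $y\geq0$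 with $y\in\mathbb{Z}^{n_{\mathrm{I}}}\times\mathbb{R}^{n_y-n_{\mathrm{I}}}$ and $Ay=b$, and every $\omega$, the set $\{x\geq0:B_\omega x=d_\omega-Dy\}$ is nonempty. The $f_i:\mathbb{R}\to\mathbb{R}$ are concave and lower semicontinuous. Given breakpoints $y_i^{(1)}<\dots<y_i^{(k_i)}$, the piecewise linear function $\overline{f}_i$ on $[y_i^{(1)},y_i^{(k_i)}]$ is $\overline{f}_i(y_i)=\frac{f_i(y_i^{(j+1)})-f_i(y_i^{(j)})}{y_i^{(j+1)}-y_i^{(j)}}(y_i-y_i^{(j)})+f_i(y_i^{(j)})$ for $y_i\in[y_i^{(j)},y_i^{(j+1)}]$. Algorithm: (1) For each $i$ set breakpoints $(y_i^{(1)},y_i^{(2)})=(\underline{y}_i,\overline{y}_i)$, $k_i=2$; set $s=1$. (2) For each $i$ construct $\overline{f}^s_i$ from the current breakpoints. (3) Solve $\min_{(y,x)\in\mathcal{X}}\sum_i\overline{f}^s_i(y_i)+\sum_\omega p_\omega c_\omega^Tx_\omega$ to an optimal solution $(\tilde{y}^s,\{\tilde{x}^s_\omega\})$. (4) If $\overline{f}^s_i(\tilde{y}^s_i)\geq f_i(\tilde{y}^s_i)$ for all $i$, stop and return $(\tilde{y}^s,\{\tilde{x}^s_\omega\})$. (5) Otherwise, for each $i$ with $\overline{f}^s_i(\tilde{y}^s_i)<f_i(\tilde{y}^s_i)$, add $\tilde{y}^s_i$ as a new breakpoint ($k_i\leftarrow k_i+1$) and re-sort the breakpoints increasingly. (6)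 Set $s\leftarrow s+1$ and go to (2). *)

theory Defs
  imports "HOL-Analysis.Analysis"
begin

text \<open>Feasible set of (SCP). Vectors are functions on nat; components outside the
  index ranges (j >= ny for y, j >= nx or omega outside Omega for x) are fixed to 0.\<close>
definition scp_feasible ::
  "'w set \<Rightarrow> nat \<Rightarrow> nat \<Rightarrow> nat \<Rightarrow> nat \<Rightarrow> nat \<Rightarrow>
   (nat \<Rightarrow> nat \<Rightarrow> real) \<Rightarrow> (nat \<Rightarrow> real) \<Rightarrow> (nat \<Rightarrow> nat \<Rightarrow> real) \<Rightarrow>
   ('w \<Rightarrow> nat \<Rightarrow> nat \<Rightarrow> real) \<Rightarrow> ('w \<Rightarrow> nat \<Rightarrow> real) \<Rightarrow>
   ((nat \<Rightarrow> real) \<times> ('w \<Rightarrow> nat \<Rightarrow> real)) set" where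
  "scp_feasible \<Omega> ny nI nx m1 m2 A b D B d =
    {(y, x). (\<forall>j. 0 \<le> y j) \<and> (\<forall>j\<ge>ny. y j = 0)
       \<and> (\<forall>j<nI. y j \<in> \<int>)
       \<and> (\<forall>r<m1. (\<Sum>j<ny. A r j * y j) = b r)
       \<and> (\<forall>w j. 0 \<le> x w j) \<and> (\<forall>w j. (w \<notin> \<Omega> \<or> nx \<le> j) \<longrightarrow> x w j = 0)
       \<and> (\<forall>w\<in>\<Omega>. \<forall>r<m2. (\<Sum>j<nx. B w r j * x w j) + (\<Sum>j<ny. D r j * y j) = d w r)}"

text \<open>Extreme point of a set of pairs of functions (the library notion
  extreme_point_of, written out pointwise since functions carry no real_vector structure).\<close>
definition is_extreme_point ::
  "((nat \<Rightarrow> real) \<times> ('w \<Rightarrow> nat \<Rightarrow> real)) set \<Rightarrow>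
   (nat \<Rightarrow> real) \<times> ('w \<Rightarrow> nat \<Rightarrow> real) \<Rightarrow> bool" where
  "is_extreme_point S p \<longleftrightarrow> p \<in> S \<and>
     (\<forall>a\<in>S. \<forall>c\<in>S. \<forall>u::real. 0 < u \<and> u < 1 \<and>
        fst p = (\<lambda>j. (1 - u) * fst a j + u * fst c j) \<and>
        snd p = (\<lambda>w j. (1 - u) * snd a w j + u * snd c w j) \<longrightarrow> a = c)"

text \<open>Piecewise linear interpolant of f through breakpoints B (a finite set of reals),
  for arguments in [Min B, Max B]: f itself at breakpoints, linear interpolation
  between consecutive breakpoints otherwise.\<close>
definition pwl :: "(real \<Rightarrow> real) \<Rightarrow> real set \<Rightarrow> real \<Rightarrow> real" where
  "pwl f B t = (if t \<in> B then f t else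
     (let a = Max {v\<in>B. v < t}; c = Min {v\<in>B. t < v}
      in (f c - f a) / (c - a) * (t - a) + f a))"

definition scp_obj ::
  "'w set \<Rightarrow> nat \<Rightarrow> nat \<Rightarrow> (nat \<Rightarrow> real \<Rightarrow> real) \<Rightarrow> ('w \<Rightarrow> real) \<Rightarrow> ('w \<Rightarrow> nat \<Rightarrow> real) \<Rightarrow>
   (nat \<Rightarrow> real) \<times> ('w \<Rightarrow> nat \<Rightarrow> real) \<Rightarrow> real" where
  "scp_obj \<Omega> ny nx g p c yx =
     (\<Sum>i<ny. g i (fst yx i)) + (\<Sum>w\<in>\<Omega>. p w * (\<Sum>j<nx. c w j * snd yx w j))"

end

theory Submission
  imports Defs
begin

lemma pwl_le:
  fixes f :: "real \<Rightarrow> real"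
  assumes cv: "concave_on UNIV f" and fin: "finite Bs" and ne: "Bs \<noteq> {}"
    and lo: "Min Bs \<le> t" and hi: "t \<le> Max Bs"
  shows "pwl f Bs t \<le> f t"
proof (cases "t \<in> Bs")
  case True then show ?thesis by (simp add: pwl_def)
next
  case False
  define L where "L = {v\<in>Bs. v < t}"
  define U where "U = {v\<in>Bs. t < v}"
  have "Min Bs \<in> L" using False lo fin ne Min_in[OF fin ne] unfolding L_def
    by (metis (mono_tags, lifting) mem_Collect_eq order_le_less)
  hence Lne: "L \<noteq> {}" and Lfin: "finite L" using fin unfolding L_def by auto
  have "Max Bs \<in> U" using False hi fin ne Max_in[OF fin ne] unfolding U_def
    by (metis (mono_tags, lifting) mem_Collect_eq order_le_less)
  hence Une: "U \<noteq> {}" and Ufin: "finite U" using fin unfolding U_def by auto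
  define a where "a = Max L"
  define c where "c = Min U"
  have aL: "a \<in> L" using Max_in[OF Lfin Lne] a_def by simp
  have cU: "c \<in> U" using Min_in[OF Ufin Une] c_def by simp
  have at: "a < t" using aL L_def by simp
  have tc: "t < c" using cU U_def by simp
  define u where "u = (t - a) / (c - a)"
  have u0: "0 \<le> u" and u1: "u \<le> 1" using at tc by (auto simp: u_def divide_simps)
  have "u * (c - a) = t - a" using at tc by (simp add: u_def)
  hence teq: "t = (1 - u) *\<^sub>R a + u *\<^sub>R c" by (simp add: algebra_simps)
  have "f t \<ge> (1 - u) * f a + u * f c"
    using concave_onD[OF cv u0 u1] teq by simp
  moreover have "pwl f Bs t = (f c - f a) / (c - a) * (t - a) + f a"
    using False by (simp add: pwl_def Let_def a_def c_def L_def U_def)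
  moreover have "(f c - f a) / (c - a) * (t - a) = u * (f c - f a)"
    by (simp add: u_def)
  hence "(f c - f a) / (c - a) * (t - a) + f a = (1 - u) * f a + u * f c"
    by (simp add: algebra_simps)
  ultimately show ?thesis by simp
qed

lemma ext_eq:
  fixes z z' z0 :: "(nat \<Rightarrow> real) \<times> ('w \<Rightarrow> nat \<Rightarrow> real)"
  assumes S_def: "S = {q \<in> scp_feasible \<Omega> ny nI nx m1 m2 A b D B d. \<forall>i<nI. fst q i = fst z0 i}"
    and ext: "is_extreme_point S z" and z'S: "z' \<in> S"
   and sy: "\<forall>j. 0 < fst z' j \<longrightarrow> 0 < fst z j" and sx: "\<forall>w j. 0 < snd z' w j \<longrightarrow> 0 < snd z w j"
   and fin: "finite \<Omega>"
  shows "z = z'"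
proof -
  obtain y x where z: "z = (y, x)" by fastforce
  obtain y' x' where z': "z' = (y', x')" by fastforce
  have zS: "z \<in> S" using ext by (simp add: is_extreme_point_def)
  note F = zS z'S[unfolded S_def scp_feasible_def z z', simplified]
  have Fz: "(\<forall>j. 0 \<le> y j) \<and> (\<forall>j\<ge>ny. y j = 0)
       \<and> (\<forall>j<nI. y j \<in> \<int>)
       \<and> (\<forall>r<m1. (\<Sum>j<ny. A r j * y j) = b r)
       \<and> (\<forall>w j. 0 \<le> x w j) \<and> (\<forall>w j. (w \<notin> \<Omega> \<or> nx \<le> j) \<longrightarrow> x w j = 0)
       \<and> (\<forall>w\<in>\<Omega>. \<forall>r<m2. (\<Sum>j<nx. B w r j * x w j) + (\<Sum>j<ny. D r j * y j) = d w r)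
       \<and> (\<forall>i<nI. y i = fst z0 i)"
    using zS unfolding S_def scp_feasible_def z by auto
  have Fz': "(\<forall>j. 0 \<le> y' j) \<and> (\<forall>j\<ge>ny. y' j = 0)
       \<and> (\<forall>j<nI. y' j \<in> \<int>)
       \<and> (\<forall>r<m1. (\<Sum>j<ny. A r j * y' j) = b r)
       \<and> (\<forall>w j. 0 \<le> x' w j) \<and> (\<forall>w j. (w \<notin> \<Omega> \<or> nx \<le> j) \<longrightarrow> x' w j = 0)
       \<and> (\<forall>w\<in>\<Omega>. \<forall>r<m2. (\<Sum>j<nx. B w r j * x' w j) + (\<Sum>j<ny. D r j * y' j) = d w r)
       \<and> (\<forall>i<nI. y' i = fst z0 i)"
    using z'S unfolding S_def scp_feasible_def z' by auto
  define T where "T = insert 1 ((\<lambda>j. y j / y' j) ` {j. j < ny \<and> 0 < y' j}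
      \<union> (\<lambda>(w,j). x w j / x' w j) ` {(w,j). w \<in> \<Omega> \<and> j < nx \<and> 0 < x' w j})"
  have Tfin: "finite T" unfolding T_def
  proof -
    have "{(w,j). w \<in> \<Omega> \<and> j < nx \<and> 0 < x' w j} \<subseteq> \<Omega> \<times> {..<nx}" by auto
    hence "finite {(w,j). w \<in> \<Omega> \<and> j < nx \<and> 0 < x' w j}"
      using fin by (meson finite_SigmaI finite_lessThan finite_subset)
    thus "finite (insert 1 ((\<lambda>j. y j / y' j) ` {j. j < ny \<and> 0 < y' j}
      \<union> (\<lambda>(w,j). x w j / x' w j) ` {(w,j). w \<in> \<Omega> \<and> j < nx \<and> 0 < x' w j}))" by auto
  qed
  have Tpos: "\<forall>r\<in>T. 0 < r" unfolding T_def using sy sx z z' by auto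
  define t where "t = Min T"
  have "t \<in> T" unfolding t_def using Tfin by (intro Min_in) (auto simp: T_def)
  hence t0: "0 < t" using Tpos by blast
  have ty: "t * y' j \<le> y j" for j
  proof (cases "0 < y' j")
    case True
    hence "j < ny" by (cases "j < ny") (use Fz' in auto)
    hence "t \<le> y j / y' j" unfolding t_def using Tfin True by (intro Min_le) (auto simp: T_def)
    thus ?thesis using True by (simp add: field_simps)
  next
    case False
    moreover have "0 \<le> y' j" using Fz' by blast
    ultimately have "y' j = 0" by simp
    thus ?thesis using Fz by simp
  qed
  have tx: "t * x' w j \<le> x w j" for w j
  proof (cases "0 < x' w j")
    case True
    hence "w \<in> \<Omega> \<and> j < nx" by (cases "w \<in> \<Omega> \<and> j < nx") (use Fz' in auto)
    hence "t \<le> x w j / x' w j" unfolding t_def using Tfin True by (intro Min_le) (auto simp: T_def)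
    thus ?thesis using True by (simp add: field_simps)
  next
    case False
    moreover have "0 \<le> x' w j" using Fz' by blast
    ultimately have "x' w j = 0" by simp
    thus ?thesis using Fz by simp
  qed
  define ay where "ay = (\<lambda>j. (1 + t) * y j - t * y' j)"
  define ax where "ax = (\<lambda>w j. (1 + t) * x w j - t * x' w j)"
  have aS: "(ay, ax) \<in> S"
  proof -
    have "\<forall>j. 0 \<le> ay j"
    proof
      fix j have "0 \<le> y j" using Fz by blast
      hence "0 \<le> t * y j" using t0 by simp
      thus "0 \<le> ay j" using ty[of j] \<open>0 \<le> y j\<close> unfolding ay_def by (simp add: algebra_simps)
    qed
    moreover have "\<forall>j\<ge>ny. ay j = 0" using Fz Fz' by (simp add: ay_def)
    moreover have "\<forall>j<nI. ay j = y j" using Fz Fz' by (simp add: ay_def algebra_simps)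
    moreover have "\<forall>r<m1. (\<Sum>j<ny. A r j * ay j) = b r"
    proof (intro allI impI)
      fix r assume "r < m1"
      have "(\<Sum>j<ny. A r j * ay j) = (1+t) * (\<Sum>j<ny. A r j * y j) - t * (\<Sum>j<ny. A r j * y' j)"
        by (simp add: ay_def sum_distrib_left sum_subtractf algebra_simps)
      also have "\<dots> = (1+t) * b r - t * b r" using Fz Fz' \<open>r < m1\<close> by simp
      finally show "(\<Sum>j<ny. A r j * ay j) = b r" by (simp add: algebra_simps)
    qed
    moreover have "\<forall>w j. 0 \<le> ax w j"
    proof (intro allI)
      fix w j have "0 \<le> x w j" using Fz by blast
      hence "0 \<le> t * x w j" using t0 by simp
      thus "0 \<le> ax w j" using tx[of w j] \<open>0 \<le> x w j\<close> unfolding ax_def by (simp add: algebra_simps)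
    qed
    moreover have "\<forall>w j. (w \<notin> \<Omega> \<or> nx \<le> j) \<longrightarrow> ax w j = 0" using Fz Fz' by (simp add: ax_def)
    moreover have "\<forall>w\<in>\<Omega>. \<forall>r<m2. (\<Sum>j<nx. B w r j * ax w j) + (\<Sum>j<ny. D r j * ay j) = d w r"
    proof (intro ballI allI impI)
      fix w r assume "w \<in> \<Omega>" "r < m2"
      have "(\<Sum>j<nx. B w r j * ax w j) + (\<Sum>j<ny. D r j * ay j)
         = (1+t) * ((\<Sum>j<nx. B w r j * x w j) + (\<Sum>j<ny. D r j * y j))
           - t * ((\<Sum>j<nx. B w r j * x' w j) + (\<Sum>j<ny. D r j * y' j))"
        by (simp add: ax_def ay_def sum_distrib_left sum_subtractf algebra_simps sum.distrib)
      also have "\<dots> = (1+t) * d w r - t * d w r" using Fz Fz' \<open>w \<in> \<Omega>\<close> \<open>r < m2\<close> by simp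
      finally show "(\<Sum>j<nx. B w r j * ax w j) + (\<Sum>j<ny. D r j * ay j) = d w r" by (simp add: algebra_simps)
    qed
    ultimately show ?thesis using Fz unfolding S_def scp_feasible_def by auto
  qed
  define u where "u = t / (1 + t)"
  have u0: "0 < u" and u1: "u < 1" using t0 by (auto simp: u_def)
  have h1: "(1-u)*(1+t) = 1" using t0 by (simp add: u_def field_simps)
  have h2: "(1-u)*t = u" using t0 by (simp add: u_def field_simps)
  have key: "(1 - u) * ((1+t)*a - t*bb) + u*bb = a" for a bb
  proof -
    have "(1 - u) * ((1+t)*a - t*bb) = ((1-u)*(1+t))*a - ((1-u)*t)*bb" by (simp add: algebra_simps)
    thus ?thesis using h1 h2 by simp
  qed
  have e1: "fst z = (\<lambda>j. (1 - u) * fst (ay, ax) j + u * fst z' j)"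
    by (simp add: z z' ay_def key)
  have e2: "snd z = (\<lambda>w j. (1 - u) * snd (ay, ax) w j + u * snd z' w j)"
    by (simp add: z z' ax_def key)
  have "(ay, ax) = z'" using ext aS z'S u0 u1 e1 e2 unfolding is_extreme_point_def by blast
  hence ayy: "ay = y'" and axx: "ax = x'" using z' by auto
  have yy: "y j = y' j" for j
  proof -
    have "(1+t)*y j - t*y' j = y' j" using fun_cong[OF ayy, of j] by (simp add: ay_def)
    hence "(1+t)*(y j - y' j) = 0" by (simp add: algebra_simps)
    thus ?thesis using t0 by simp
  qed
  have xx: "x w j = x' w j" for w j
  proof -
    have "(1+t)*x w j - t*x' w j = x' w j" using fun_cong[OF fun_cong[OF axx, of w], of j] by (simp add: ax_def)
    hence "(1+t)*(x w j - x' w j) = 0" by (simp add: algebra_simps)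
    thus ?thesis using t0 by simp
  qed
  have "y = y'" "x = x'" using yy xx by (auto simp: fun_eq_iff)
  thus ?thesis using z z' by simp
qed

theorem theorem3:
  fixes \<Omega> :: "'w set"
    and ny nI nx m1 m2 :: nat
    and A :: "nat \<Rightarrow> nat \<Rightarrow> real" and b :: "nat \<Rightarrow> real"
    and D :: "nat \<Rightarrow> nat \<Rightarrow> real"
    and p :: "'w \<Rightarrow> real" and c :: "'w \<Rightarrow> nat \<Rightarrow> real"
    and B :: "'w \<Rightarrow> nat \<Rightarrow> nat \<Rightarrow> real" and d :: "'w \<Rightarrow> nat \<Rightarrow> real"
    and f :: "nat \<Rightarrow> real \<Rightarrow> real"
    and ylo yhi :: "nat \<Rightarrow> real"
    and Z :: "nat \<Rightarrow> (nat \<Rightarrow> real) \<times> ('w \<Rightarrow> nat \<Rightarrow> real)"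
    and Bp :: "nat \<Rightarrow> nat \<Rightarrow> real set"
  defines "X \<equiv> scp_feasible \<Omega> ny nI nx m1 m2 A b D B d"
    and "stop \<equiv> (\<lambda>s. \<forall>i<ny. f i (fst (Z s) i) \<le> pwl (f i) (Bp s i) (fst (Z s) i))"
  assumes fin: "finite \<Omega>"
    and nI_le: "nI \<le> ny"
    and X_ne: "X \<noteq> {}"
    and X_bdd: "\<exists>M. \<forall>(y, x)\<in>X. (\<forall>j. \<bar>y j\<bar> \<le> M) \<and> (\<forall>w j. \<bar>x w j\<bar> \<le> M)"
    and y_bnds: "\<forall>(y, x)\<in>X. \<forall>i<ny. ylo i \<le> y i \<and> y i \<le> yhi i"
    and recourse: "\<And>y. (\<forall>j. 0 \<le> y j) \<Longrightarrow> (\<forall>j\<ge>ny. y j = 0) \<Longrightarrow> (\<forall>j<nI. y j \<in> \<int>) \<Longrightarrow>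
        (\<forall>r<m1. (\<Sum>j<ny. A r j * y j) = b r) \<Longrightarrow>
        \<forall>w\<in>\<Omega>. \<exists>x::nat \<Rightarrow> real. (\<forall>j<nx. 0 \<le> x j) \<and>
          (\<forall>r<m2. (\<Sum>j<nx. B w r j * x j) = d w r - (\<Sum>j<ny. D r j * y j))"
    and concave: "\<And>i. i < ny \<Longrightarrow> concave_on UNIV (f i)"
    and lsc: "\<And>i a. i < ny \<Longrightarrow> open {t. a < f i t}"
    and init: "\<And>i. i < ny \<Longrightarrow> Bp 1 i = {ylo i, yhi i}"
    and solve_opt: "\<And>s. 1 \<le> s \<Longrightarrow> (\<forall>s'\<in>{1..<s}. \<not> stop s') \<Longrightarrow>
        Z s \<in> X \<and>
        (\<forall>z\<in>X. scp_obj \<Omega> ny nx (\<lambda>i. pwl (f i) (Bp s i)) p c (Z s)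
                \<le> scp_obj \<Omega> ny nx (\<lambda>i. pwl (f i) (Bp s i)) p c z)"
    and solve_ext: "\<And>s. 1 \<le> s \<Longrightarrow> (\<forall>s'\<in>{1..<s}. \<not> stop s') \<Longrightarrow>
        is_extreme_point {z\<in>X. \<forall>i<nI. fst z i = fst (Z s) i} (Z s)"
    and update: "\<And>s i. 1 \<le> s \<Longrightarrow> (\<forall>s'\<in>{1..<s}. \<not> stop s') \<Longrightarrow> \<not> stop s \<Longrightarrow> i < ny \<Longrightarrow>
        Bp (Suc s) i = (if pwl (f i) (Bp s i) (fst (Z s) i) < f i (fst (Z s) i)
                        then insert (fst (Z s) i) (Bp s i) else Bp s i)"
  shows "\<exists>s\<ge>1. stop s \<and> (\<forall>s'\<in>{1..<s}. \<not> stop s') \<and> Z s \<in> X \<and>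
           (\<forall>z\<in>X. scp_obj \<Omega> ny nx f p c (Z s) \<le> scp_obj \<Omega> ny nx f p c z)"
proof -
  have stopE: "stop s = (\<forall>i<ny. f i (fst (Z s) i) \<le> pwl (f i) (Bp s i) (fst (Z s) i))" for s
    by (simp add: stop_def)
  define R where "R = {s. 1 \<le> s \<and> (\<forall>s'\<in>{1..<s}. \<not> stop s')}"
  have Rsub: "s \<in> R \<Longrightarrow> 1 \<le> s' \<Longrightarrow> s' \<le> s \<Longrightarrow> s' \<in> R" for s s' by (auto simp: R_def)
  have RZ: "s \<in> R \<Longrightarrow> Z s \<in> X" for s using solve_opt by (auto simp: R_def)
  have Ropt: "s \<in> R \<Longrightarrow> z \<in> X \<Longrightarrow> scp_obj \<Omega> ny nx (\<lambda>i. pwl (f i) (Bp s i)) p c (Z s)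
                \<le> scp_obj \<Omega> ny nx (\<lambda>i. pwl (f i) (Bp s i)) p c z" for s z
    using solve_opt by (auto simp: R_def)
  have RE: "s \<in> R \<Longrightarrow> is_extreme_point {z\<in>X. \<forall>i<nI. fst z i = fst (Z s) i} (Z s)" for s
    using solve_ext by (auto simp: R_def)
  obtain y0 x0 where yx0: "(y0, x0) \<in> X" using X_ne by auto
  have yb: "i < ny \<Longrightarrow> ylo i \<le> yhi i" for i using y_bnds yx0 by fastforce
  have zb: "z \<in> X \<Longrightarrow> i < ny \<Longrightarrow> ylo i \<le> fst z i \<and> fst z i \<le> yhi i" for z i
    using y_bnds by (cases z) auto
  define P where "P = (\<lambda>s i. ylo i \<in> Bp s i \<and> yhi i \<in> Bp s i \<and> Bp s i \<subseteq> {ylo i..yhi i} \<and>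
      Bp s i \<subseteq> insert (ylo i) (insert (yhi i) ((\<lambda>s'. fst (Z s') i) ` {1..<s})))"
  have inv: "s \<in> R \<longrightarrow> (\<forall>i<ny. P s i)" for s
  proof (induction s)
    case 0 show ?case by (simp add: R_def)
  next
    case (Suc n)
    show ?case
    proof (intro impI allI)
      fix i assume SR: "Suc n \<in> R" and i: "i < ny"
      show "P (Suc n) i"
      proof (cases "n = 0")
        case True then show ?thesis using init[OF i] yb[OF i] by (auto simp: P_def)
      next
        case False
        hence nR: "n \<in> R" using Rsub[OF SR, of n] by auto
        have ns: "\<not> stop n" using SR False by (auto simp: R_def)
        have upd: "Bp (Suc n) i = (if pwl (f i) (Bp n i) (fst (Z n) i) < f i (fst (Z n) i)
                        then insert (fst (Z n) i) (Bp n i) else Bp n i)"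
          using update[of n i] nR ns i by (auto simp: R_def)
        have IH: "P n i" using Suc.IH nR i by blast
        have zn: "ylo i \<le> fst (Z n) i \<and> fst (Z n) i \<le> yhi i" using zb[OF RZ[OF nR] i] .
        have "{1..<Suc n} = insert n {1..<n}" using False by auto
        hence im: "(\<lambda>s'. fst (Z s') i) ` {1..<Suc n} = insert (fst (Z n) i) ((\<lambda>s'. fst (Z s') i) ` {1..<n})"
          by simp
        show ?thesis using upd IH zn unfolding P_def im by auto
      qed
    qed
  qed
  have Bfin: "s \<in> R \<Longrightarrow> i < ny \<Longrightarrow> finite (Bp s i)" for s i
    using inv[of s] unfolding P_def by (meson finite.insertI finite_atLeastLessThan finite_imageI finite_subset)
  obtain M where M: "\<forall>(y, x)\<in>X. (\<forall>j. \<bar>y j\<bar> \<le> M) \<and> (\<forall>w j. \<bar>x w j\<bar> \<le> M)" using X_bdd by blast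
  define Iset where "Iset = {r::real. r \<in> \<int> \<and> \<bar>r\<bar> \<le> M}"
  have Ifin: "finite Iset"
  proof -
    have "Iset \<subseteq> of_int ` {-\<lceil>M\<rceil>..\<lceil>M\<rceil>}"
    proof
      fix r assume "r \<in> Iset"
      then obtain k where k: "r = of_int k" and kb: "\<bar>of_int k\<bar> \<le> M" unfolding Iset_def by (auto elim: Ints_cases)
      have "real_of_int \<bar>k\<bar> \<le> real_of_int \<lceil>M\<rceil>" using kb le_of_int_ceiling[of M] by linarith
      hence "\<bar>k\<bar> \<le> \<lceil>M\<rceil>" by (simp only: of_int_le_iff)
      hence "k \<in> {-\<lceil>M\<rceil>..\<lceil>M\<rceil>}" by (simp add: abs_le_iff)
      thus "r \<in> of_int ` {-\<lceil>M\<rceil>..\<lceil>M\<rceil>}" using k by (rule rev_image_eqI)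
    qed
    thus ?thesis by (rule finite_subset) simp
  qed
  define key where "key = (\<lambda>z::(nat \<Rightarrow> real) \<times> ('w \<Rightarrow> nat \<Rightarrow> real).
      (map (fst z) [0..<nI], {j. 0 < fst z j}, {(w,j). 0 < snd z w j}))"
  define K where "K = {xs. set xs \<subseteq> Iset \<and> length xs = nI} \<times> Pow {..<ny} \<times> Pow (\<Omega> \<times> {..<nx})"
  have Kfin: "finite K" unfolding K_def using Ifin fin by (simp add: finite_lists_length_eq)
  have keyK: "key ` (Z ` R) \<subseteq> K"
  proof
    fix k assume "k \<in> key ` (Z ` R)"
    then obtain s where sR: "s \<in> R" and k: "k = key (Z s)" by auto
    obtain y x where yx: "Z s = (y, x)" by fastforce
    have F: "(y, x) \<in> X" using RZ[OF sR] yx by simp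
    have a: "set (map y [0..<nI]) \<subseteq> Iset"
    proof
      fix r assume "r \<in> set (map y [0..<nI])"
      then obtain j where j: "j < nI" "r = y j" by auto
      have "y j \<in> \<int>" using F j unfolding X_def scp_feasible_def by auto
      moreover have "\<bar>y j\<bar> \<le> M" using M F by fastforce
      ultimately show "r \<in> Iset" using j by (simp add: Iset_def)
    qed
    have b: "{j. 0 < y j} \<subseteq> {..<ny}"
    proof
      fix j assume "j \<in> {j. 0 < y j}"
      thus "j \<in> {..<ny}" using F unfolding X_def scp_feasible_def by (cases "j < ny") auto
    qed
    have c: "{(w,j). 0 < x w j} \<subseteq> \<Omega> \<times> {..<nx}"
    proof
      fix q assume "q \<in> {(w,j). 0 < x w j}"
      then obtain w j where q: "q = (w, j)" "0 < x w j" by auto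
      thus "q \<in> \<Omega> \<times> {..<nx}" using F unfolding X_def scp_feasible_def by (cases "w \<in> \<Omega> \<and> j < nx") auto
    qed
    show "k \<in> K" using a b c unfolding k key_def K_def yx by simp
  qed
  have keyinj: "inj_on key (Z ` R)"
  proof (rule inj_onI)
    fix z1 z2 assume z1: "z1 \<in> Z ` R" and z2: "z2 \<in> Z ` R" and eq: "key z1 = key z2"
    obtain s1 where s1: "s1 \<in> R" "z1 = Z s1" using z1 by auto
    obtain s2 where s2: "s2 \<in> R" "z2 = Z s2" using z2 by auto
    have m: "map (fst z2) [0..<nI] = map (fst z1) [0..<nI]" using eq by (simp add: key_def)
    have ii: "\<forall>i<nI. fst z2 i = fst z1 i" using m by (simp add: map_eq_conv)
    have sy: "{j. 0 < fst z2 j} = {j. 0 < fst z1 j}" using eq by (simp add: key_def)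
    have sx: "{(w,j). 0 < snd z2 w j} = {(w,j). 0 < snd z1 w j}" using eq by (simp add: key_def)
    have sy': "\<forall>j. 0 < fst z2 j \<longrightarrow> 0 < fst z1 j" using sy by blast
    have sx': "\<forall>w j. 0 < snd z2 w j \<longrightarrow> 0 < snd z1 w j"
    proof (intro allI impI)
      fix w j assume "0 < snd z2 w j"
      hence "(w, j) \<in> {(w,j). 0 < snd z2 w j}" by simp
      thus "0 < snd z1 w j" using sx by simp
    qed
    have z2S: "z2 \<in> {q \<in> scp_feasible \<Omega> ny nI nx m1 m2 A b D B d. \<forall>i<nI. fst q i = fst z1 i}"
      using RZ[OF s2(1)] s2(2) ii X_def by simp
    have ext: "is_extreme_point {q \<in> scp_feasible \<Omega> ny nI nx m1 m2 A b D B d. \<forall>i<nI. fst q i = fst z1 i} z1"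
      using RE[OF s1(1)] s1(2) X_def by simp
    show "z1 = z2" by (rule ext_eq[OF refl ext z2S sy' sx' fin])
  qed
  have Zfin: "finite (Z ` R)"
    using keyinj keyK Kfin by (meson finite_imageD finite_subset)
  have ex: "\<exists>s\<ge>1. stop s"
  proof (rule ccontr)
    assume H: "\<not> (\<exists>s\<ge>1. stop s)"
    have allR: "1 \<le> s \<Longrightarrow> s \<in> R" for s using H by (auto simp: R_def)
    define V where "V = (\<lambda>i. insert (ylo i) (insert (yhi i) ((\<lambda>z. fst z i) ` (Z ` R))))"
    have Vfin: "finite (V i)" for i using Zfin by (simp add: V_def)
    have BV: "s \<in> R \<Longrightarrow> i < ny \<Longrightarrow> Bp s i \<subseteq> V i" for s i
    proof -
      assume sR: "s \<in> R" and i: "i < ny"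
      have "(\<lambda>s'. fst (Z s') i) ` {1..<s} \<subseteq> (\<lambda>z. fst z i) ` (Z ` R)"
        using Rsub[OF sR] by auto
      thus ?thesis using inv[of s] sR i unfolding P_def V_def by blast
    qed
    define g where "g = (\<lambda>s. \<Sum>i<ny. card (Bp s i))"
    define KK where "KK = (\<Sum>i<ny. card (V i))"
    have gle: "s \<in> R \<Longrightarrow> g s \<le> KK" for s
      unfolding g_def KK_def by (intro sum_mono card_mono) (auto simp: Vfin BV)
    have gstep: "1 \<le> s \<Longrightarrow> g s < g (Suc s)" for s
    proof -
      assume s1: "1 \<le> s"
      have sR: "s \<in> R" and SR: "Suc s \<in> R" using allR s1 by auto
      have ns: "\<not> stop s" using H s1 by auto
      then obtain i0 where i0: "i0 < ny" and lt: "\<not> f i0 (fst (Z s) i0) \<le> pwl (f i0) (Bp s i0) (fst (Z s) i0)"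
        using stopE by auto
      have upd: "\<And>i. i < ny \<Longrightarrow> Bp (Suc s) i = (if pwl (f i) (Bp s i) (fst (Z s) i) < f i (fst (Z s) i)
                        then insert (fst (Z s) i) (Bp s i) else Bp s i)"
        using update[of s] sR ns by (auto simp: R_def)
      have sub: "i < ny \<Longrightarrow> Bp s i \<subseteq> Bp (Suc s) i" for i using upd[of i] by auto
      have nin: "fst (Z s) i0 \<notin> Bp s i0" using lt by (auto simp: pwl_def)
      have "card (Bp s i0) < card (Bp (Suc s) i0)"
        using upd[OF i0] lt nin Bfin[OF sR i0] by simp
      moreover have "\<forall>i\<in>{..<ny}. card (Bp s i) \<le> card (Bp (Suc s) i)"
        using sub Bfin[OF SR] by (auto intro: card_mono)
      ultimately show "g s < g (Suc s)" unfolding g_def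
        using i0 by (intro sum_strict_mono_ex1) auto
    qed
    have grow: "k \<le> g (Suc k)" for k
    proof (induction k)
      case 0 show ?case by simp
    next
      case (Suc k) thus ?case using gstep[of "Suc k"] by simp
    qed
    have "Suc KK \<le> g (Suc (Suc KK))" by (rule grow)
    moreover have "g (Suc (Suc KK)) \<le> KK" using gle allR by simp
    ultimately show False by simp
  qed
  define s0 where "s0 = (LEAST s. 1 \<le> s \<and> stop s)"
  have s0: "1 \<le> s0 \<and> stop s0" unfolding s0_def using ex by (rule LeastI_ex)
  have before: "\<forall>s'\<in>{1..<s0}. \<not> stop s'"
  proof
    fix s' assume "s' \<in> {1..<s0}"
    hence lt: "s' < s0" and ge: "1 \<le> s'" by auto
    have "\<not> (1 \<le> s' \<and> stop s')" using lt unfolding s0_def by (rule not_less_Least)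
    thus "\<not> stop s'" using ge by simp
  qed
  have s0R: "s0 \<in> R" using s0 before by (simp add: R_def)
  have opt: "scp_obj \<Omega> ny nx f p c (Z s0) \<le> scp_obj \<Omega> ny nx f p c z" if zX: "z \<in> X" for z
  proof -
    have "(\<Sum>i<ny. f i (fst (Z s0) i)) \<le> (\<Sum>i<ny. pwl (f i) (Bp s0 i) (fst (Z s0) i))"
      using s0 stopE by (intro sum_mono) auto
    hence "scp_obj \<Omega> ny nx f p c (Z s0) \<le> scp_obj \<Omega> ny nx (\<lambda>i. pwl (f i) (Bp s0 i)) p c (Z s0)"
      by (simp add: scp_obj_def)
    also have "\<dots> \<le> scp_obj \<Omega> ny nx (\<lambda>i. pwl (f i) (Bp s0 i)) p c z" using Ropt[OF s0R zX] .
    also have "\<dots> \<le> scp_obj \<Omega> ny nx f p c z"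
    proof -
      have "(\<Sum>i<ny. pwl (f i) (Bp s0 i) (fst z i)) \<le> (\<Sum>i<ny. f i (fst z i))"
      proof (intro sum_mono)
        fix i assume "i \<in> {..<ny}"
        hence i: "i < ny" by simp
        have Pi: "P s0 i" using inv[of s0] s0R i by blast
        have fB: "finite (Bp s0 i)" using Bfin[OF s0R i] .
        have ne: "Bp s0 i \<noteq> {}" using Pi by (auto simp: P_def)
        have "Min (Bp s0 i) \<le> ylo i" using Pi fB by (auto simp: P_def)
        moreover have "yhi i \<le> Max (Bp s0 i)" using Pi fB by (auto simp: P_def)
        moreover have "ylo i \<le> fst z i \<and> fst z i \<le> yhi i" using zb[OF zX i] .
        ultimately show "pwl (f i) (Bp s0 i) (fst z i) \<le> f i (fst z i)"
          using pwl_le[OF concave[OF i] fB ne] by simp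
      qed
      thus ?thesis by (simp add: scp_obj_def)
    qed
    finally show ?thesis .
  qed
  show ?thesis using s0 before RZ[OF s0R] opt by blast
qed

end
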